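(* The minimal functor $\mathcal M_{\min}$ is (admits the structure of) a lax monoidal functor from $(\mathbf{Ord},\times,(\mathbf 1,=))$ to $(\mathbf{Set},\times,\mathbf 1)$.
   Context: $\mathbf{Ord}$ is the category of posets and monotone maps, with cartesian product $\times$ (product order) and the one-point poset $\mathbf 1$; $\mathbf{Set}$ has the cartesian monoidal structure. For a poset $X$, $\mathcal M(X)$ is the set of nonempty finite subsets of $X$ whose elements are pairwise incomparable. For $S\subseteq X$, $S_{\circ}$ denotes the set of minimal elements of $S$. The minimal functor $\mathcal M_{\min}:\mathbf{Ord}\to\mathbf{Set}$ is given by $\mathcal M_{\min}(X)=\mathcal M(X)$ (as a set) and $\mathcal M_{\min}(f)(S)=(f(S))_{\circ}$ for monotone $f:X\to Y$. *)

theory Defs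
  imports Main "HOL-Library.Product_Order"
begin

text \<open>Posets are modelled as types of class order; monotone maps are functions f with mono f.
 The product of posets is the product type with the componentwise (product) order from
 HOL-Library.Product_Order; the one-point poset is the type unit.\<close>

definition minimals :: "'a::order set \<Rightarrow> 'a set" where
  "minimals S = {x \<in> S. \<not> (\<exists>y\<in>S. y < x)}"

definition Mset :: "'a::order set set" where
  "Mset = {S. S \<noteq> {} \<and> finite S \<and>
              (\<forall>x\<in>S. \<forall>y\<in>S. x \<noteq> y \<longrightarrow> \<not> x \<le> y \<and> \<not> y \<le> x)}"

definition Mmin :: "('a::order \<Rightarrow> 'b::order) \<Rightarrow> 'a set \<Rightarrow> 'b set" where
  "Mmin f S = minimals (f ` S)"

definition Mmu :: "'a set \<Rightarrow> 'b set \<Rightarrow> ('a \<times> 'b) set" where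
  "Mmu S T = S \<times> T"

definition Meta :: "unit \<Rightarrow> unit set" where
  "Meta u = {()}"

end

theory Submission
  imports Defs
begin


lemma antichain_minimals_id:
  fixes S :: "'a::order set"
  assumes "S \<in> Mset" shows "minimals S = S"
  using assms unfolding Mset_def minimals_def by (auto simp: less_le)

lemma minimals_in_Mset:
  fixes A :: "'a::order set"
  assumes "finite A" "A \<noteq> {}" shows "minimals A \<in> Mset"
proof -
  obtain m where "m \<in> A" "\<forall>b\<in>A. b \<le> m \<longrightarrow> m = b"
    using finite_has_minimal[OF assms] by blast
  then have "m \<in> minimals A" unfolding minimals_def by (auto simp: less_le)
  then show ?thesis using assms unfolding Mset_def minimals_def
    by (auto simp: less_le)
qed

lemma below_minimal:
  fixes A :: "'a::order set"
  assumes "finite A" "a \<in> A" shows "\<exists>m\<in>minimals A. m \<le> a"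
proof -
  obtain m where "m \<in> A" "m \<le> a" "\<forall>b\<in>A. b \<le> m \<longrightarrow> m = b"
    using finite_has_minimal2[OF assms] by blast
  then show ?thesis unfolding minimals_def by (auto simp: less_le)
qed

lemma minimals_image_comp:
  fixes A :: "'a::order set" and g :: "'a \<Rightarrow> 'b::order"
  assumes "finite A" "mono g"
  shows "minimals (g ` A) = minimals (g ` minimals A)"
proof
  show "minimals (g ` A) \<subseteq> minimals (g ` minimals A)"
  proof
    fix z assume z: "z \<in> minimals (g ` A)"
    then obtain a where a: "a \<in> A" "z = g a" unfolding minimals_def by auto
    obtain m where m: "m \<in> minimals A" "m \<le> a" using below_minimal[OF assms(1) a(1)] by blast
    have mA: "m \<in> A" using m unfolding minimals_def by auto
    have "g m \<le> z" using m a assms(2) by (simp add: monoD)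
    then have "g m = z" using z mA unfolding minimals_def by (auto simp: less_le)
    then have "z \<in> g ` minimals A" using m by auto
    moreover have "g ` minimals A \<subseteq> g ` A" unfolding minimals_def by auto
    ultimately show "z \<in> minimals (g ` minimals A)" using z unfolding minimals_def by blast
  qed
next
  show "minimals (g ` minimals A) \<subseteq> minimals (g ` A)"
  proof
    fix z assume z: "z \<in> minimals (g ` minimals A)"
    then obtain a where a: "a \<in> minimals A" "z = g a" unfolding minimals_def by auto
    have aA: "a \<in> A" using a unfolding minimals_def by auto
    have "\<not> (\<exists>y\<in>g ` A. y < z)"
    proof
      assume "\<exists>y\<in>g ` A. y < z"
      then obtain b where b: "b \<in> A" "g b < z" by auto
      obtain m where m: "m \<in> minimals A" "m \<le> b" using below_minimal[OF assms(1) b(1)] by blast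
      have "g m \<le> g b" using m assms(2) by (simp add: monoD)
      then have "g m < z" using b by simp
      then show False using z m unfolding minimals_def by auto
    qed
    then show "z \<in> minimals (g ` A)" using aA a unfolding minimals_def by auto
  qed
qed

lemma minimals_times:
  fixes A :: "'a::order set" and B :: "'b::order set"
  shows "minimals (A \<times> B) = minimals A \<times> minimals B"
  unfolding minimals_def
  apply (auto simp: less_prod_def less_le)
  apply (metis order.refl)+
  done

lemma Mset_times:
  fixes S :: "'a::order set" and T :: "'b::order set"
  assumes "S \<in> Mset" "T \<in> Mset" shows "S \<times> T \<in> Mset"
  using assms unfolding Mset_def by auto

theorem propositionD20:
  shows
  \<comment> \<open>M_min is a functor Ord -> Set\<close>
  "(\<forall>(f::'a::order \<Rightarrow> 'b::order). mono f \<longrightarrow> (\<forall>S\<in>Mset. Mmin f S \<in> Mset))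
   \<and> (\<forall>S\<in>(Mset :: 'a::order set set). Mmin id S = S)
   \<and> (\<forall>(f::'a::order \<Rightarrow> 'b::order) (g::'b \<Rightarrow> 'c::order). mono f \<longrightarrow> mono g \<longrightarrow>
        (\<forall>S\<in>Mset. Mmin (g \<circ> f) S = Mmin g (Mmin f S)))
   \<and> (\<forall>S\<in>(Mset :: 'a::order set set). \<forall>T\<in>(Mset :: 'b::order set set). Mmu S T \<in> Mset)
   \<and> Meta () \<in> Mset
   \<and> (\<forall>(f::'a::order \<Rightarrow> 'c::order) (g::'b::order \<Rightarrow> 'd::order). mono f \<longrightarrow> mono g \<longrightarrow>
        (\<forall>S\<in>Mset. \<forall>T\<in>Mset. Mmin (map_prod f g) (Mmu S T) = Mmu (Mmin f S) (Mmin g T)))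
   \<and> (\<forall>S\<in>(Mset :: 'a::order set set). \<forall>T\<in>(Mset :: 'b::order set set).
        \<forall>U\<in>(Mset :: 'c::order set set).
        Mmin (\<lambda>((x, y), z). (x, (y, z))) (Mmu (Mmu S T) U) = Mmu S (Mmu T U))
   \<and> (\<forall>S\<in>(Mset :: 'a::order set set). Mmin snd (Mmu (Meta ()) S) = S)
   \<and> (\<forall>S\<in>(Mset :: 'a::order set set). Mmin fst (Mmu S (Meta ())) = S)"
proof (intro conjI allI impI ballI)
  fix f :: "'a::order \<Rightarrow> 'b::order" and S :: "'a set"
  assume "mono f" "S \<in> Mset"
  then show "Mmin f S \<in> Mset" unfolding Mmin_def
    by (intro minimals_in_Mset) (auto simp: Mset_def)
next
  fix S :: "'a::order set" assume "S \<in> Mset"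
  then show "Mmin id S = S" unfolding Mmin_def by (simp add: antichain_minimals_id)
next
  fix f :: "'a::order \<Rightarrow> 'b::order" and g :: "'b \<Rightarrow> 'c::order" and S :: "'a set"
  assume "mono f" "mono g" "S \<in> Mset"
  then show "Mmin (g \<circ> f) S = Mmin g (Mmin f S)" unfolding Mmin_def
  proof -
    have "finite (f ` S)" using \<open>S \<in> Mset\<close> by (simp add: Mset_def)
    then have "minimals (g ` (f ` S)) = minimals (g ` minimals (f ` S))"
      using \<open>mono g\<close> by (rule minimals_image_comp)
    then show "minimals ((g \<circ> f) ` S) = minimals (g ` minimals (f ` S))"
      by (simp add: image_comp)
  qed
next
  fix S :: "'a::order set" and T :: "'b::order set"
  assume "S \<in> Mset" "T \<in> Mset"
  then show "Mmu S T \<in> Mset" unfolding Mmu_def by (rule Mset_times)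
next
  show "Meta () \<in> Mset" unfolding Meta_def Mset_def by auto
next
  fix f :: "'a::order \<Rightarrow> 'c::order" and g :: "'b::order \<Rightarrow> 'd::order" and S :: "'a set" and T :: "'b set"
  assume "mono f" "mono g" "S \<in> Mset" "T \<in> Mset"
  show "Mmin (map_prod f g) (Mmu S T) = Mmu (Mmin f S) (Mmin g T)"
    unfolding Mmin_def Mmu_def by (simp add: map_prod_surj_on minimals_times)
next
  fix S :: "'a::order set" and T :: "'b::order set" and U :: "'c::order set"
  assume "S \<in> Mset" "T \<in> Mset" "U \<in> Mset"
  moreover have "(\<lambda>((x, y), z). (x, (y, z))) ` ((S \<times> T) \<times> U) = S \<times> (T \<times> U)"
    by force
  ultimately show "Mmin (\<lambda>((x, y), z). (x, (y, z))) (Mmu (Mmu S T) U) = Mmu S (Mmu T U)"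
    unfolding Mmin_def Mmu_def by (simp add: antichain_minimals_id Mset_times)
next
  fix S :: "'a::order set" assume "S \<in> Mset"
  moreover have "snd ` ({()} \<times> S) = S" by force
  ultimately show "Mmin snd (Mmu (Meta ()) S) = S"
    unfolding Mmin_def Mmu_def Meta_def by (simp add: antichain_minimals_id)
next
  fix S :: "'a::order set" assume "S \<in> Mset"
  moreover have "fst ` (S \<times> {()}) = S" by force
  ultimately show "Mmin fst (Mmu S (Meta ())) = S"
    unfolding Mmin_def Mmu_def Meta_def by (simp add: antichain_minimals_id)
qed

end
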